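(* Let $1\le p<\infty$, $q\in L^p(\mathbf{R}^n)$ and $G\subset\mathbf{R}^n$ open. Assume there exists $\lambda\in(0,1)$ such that \[L_q:=\Big(\int_{\mathbf{R}^n}\frac{\|q-q(\cdot-y)\|^p_{L^p(\mathbf{R}^n)}}{|y|^{n+\lambda p}}\,dy\Big)^{1/p}<+\infty.\] Then there exists a positive constant $C$, depending only on $n$, such that \[\|q\|_{L^p(G)}\le C\big(h^{-n/2}\|\mathcal{T}_hq\|_{L^p(G)}+L_qh^{\lambda/2}\big)\] for all $h\in(0,1]$, where $\mathcal{T}_hq$ is restricted to real points $x\in G$.
   Context: $\mathcal{T}_hq(x)=\int_{\mathbf{R}^n}e^{-\frac{1}{2h}|x-y|^2}q(y)\,dy$ for $x\in\mathbf{R}^n$ (the Segal–Bargmann transform at real points). *)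

theory Defs
  imports "HOL-Analysis.Analysis"
begin

definition lp_int :: "real \<Rightarrow> ('a::euclidean_space \<Rightarrow> 'b::real_normed_vector) \<Rightarrow> 'a set \<Rightarrow> ennreal" where
  "lp_int p f G = (\<integral>\<^sup>+ x\<in>G. ennreal (norm (f x) powr p) \<partial>lebesgue)"

text \<open>L^p norm of f on G (meaningful when lp_int p f G is finite).\<close>
definition lp_norm :: "real \<Rightarrow> ('a::euclidean_space \<Rightarrow> 'b::real_normed_vector) \<Rightarrow> 'a set \<Rightarrow> real" where
  "lp_norm p f G = enn2real (lp_int p f G) powr (1 / p)"

definition SB_transform :: "real \<Rightarrow> (real^'n \<Rightarrow> complex) \<Rightarrow> real^'n \<Rightarrow> complex" where
  "SB_transform h q x = (\<integral> y. exp (- (norm (x - y))\<^sup>2 / (2 * h)) *\<^sub>R q y \<partial>lebesgue)"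

definition Lq_int :: "real \<Rightarrow> real \<Rightarrow> (real^'n \<Rightarrow> complex) \<Rightarrow> ennreal" where
  "Lq_int p lam q = (\<integral>\<^sup>+ y. ennreal (enn2real (lp_int p (\<lambda>x. q x - q (x - y)) UNIV)
        / norm y powr (real CARD('n) + lam * p)) \<partial>lebesgue)"

definition Lq :: "real \<Rightarrow> real \<Rightarrow> (real^'n \<Rightarrow> complex) \<Rightarrow> real" where
  "Lq p lam q = enn2real (Lq_int p lam q) powr (1 / p)"

end

theory Submission
  imports Defs
begin

lemma tangent_powr:
  fixes t m p :: real assumes t: "0 \<le> t" and m: "0 < m" and p: "1 \<le> p"
  shows "m powr p + p * m powr (p-1) * (t - m) \<le> t powr p"
proof (cases "t = 0")
  case True
  have "m powr p = m powr (p-1) * m" using m by (simp add: powr_diff)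
  then have "m powr p + p * m powr (p-1) * (t - m) = (1 - p) * m powr p" using True by (simp add: algebra_simps)
  also have "\<dots> \<le> 0" using p by (simp add: mult_nonpos_nonneg)
  finally show ?thesis using True by simp
next
  case False
  then have t': "t > 0" using t by simp
  have "p * m powr (p-1) * (t - m) \<le> t powr p - m powr p"
    using p m t'
    by (intro convex_on_imp_above_tangent[where A = "{0<..}"] powr_convex)
       (auto intro!: derivative_eq_intros simp: interior_open)
  then show ?thesis by simp
qed

lemma u_exp_bound:
  fixes u c :: real assumes "0 \<le> u" "0 < c" shows "u * exp (- (c * u)) \<le> 1 / c"
proof -
  have "c * u \<le> exp (c * u)" using exp_ge_add_one_self[of "c*u"] by linarith
  then have "c * u * exp (- (c * u)) \<le> 1" by (simp add: exp_minus field_simps)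
  then show ?thesis using assms by (simp add: field_simps mult.assoc)
qed

lemma upow_exp_bound:
  fixes u a b :: real assumes u: "0 \<le> u" and a: "0 < a" and b: "0 < b"
  shows "u powr a * exp (- (b * u)) \<le> (a / b) powr a"
proof -
  have "exp (- (b * u)) = exp (- ((b/a) * u)) powr a"
    using a by (simp add: powr_def)
  then have "u powr a * exp (- (b * u)) = (u * exp (- ((b/a) * u))) powr a"
    using u by (simp add: powr_mult)
  also have "\<dots> \<le> (1 / (b/a)) powr a"
    using u a b by (intro powr_mono2 u_exp_bound) auto
  finally show ?thesis by simp
qed

lemma gauss_lower:
  fixes h :: real assumes h: "0 < h"
  shows "ennreal (exp (-1/2) * unit_ball_vol DIM('a) * sqrt h ^ DIM('a))
     \<le> (\<integral>\<^sup>+ (z::'a::euclidean_space). ennreal (exp (- (norm z)\<^sup>2 / (2*h))) \<partial>lborel)"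
proof -
  have "ennreal (exp (-1/2) * unit_ball_vol DIM('a) * sqrt h ^ DIM('a))
      = (\<integral>\<^sup>+ (z::'a). ennreal (exp (-1/2)) * indicator (ball 0 (sqrt h)) z \<partial>lborel)"
    using h by (simp add: nn_integral_cmult_indicator emeasure_ball ennreal_mult' mult.assoc)
  also have "\<dots> \<le> (\<integral>\<^sup>+ (z::'a). ennreal (exp (- (norm z)\<^sup>2 / (2*h))) \<partial>lborel)"
  proof (intro nn_integral_mono)
    fix z :: 'a
    show "ennreal (exp (-1/2)) * indicator (ball 0 (sqrt h)) z \<le> ennreal (exp (- (norm z)\<^sup>2 / (2*h)))"
    proof (cases "z \<in> ball 0 (sqrt h)")
      case True
      then have "norm z < sqrt h" by simp
      then have "(norm z)\<^sup>2 < (sqrt h)\<^sup>2" by (intro power_strict_mono) auto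
      then have "(norm z)\<^sup>2 < h" using h by simp
      then have "-1/2 \<le> - (norm z)\<^sup>2 / (2*h)" using h by (simp add: field_simps)
      then show ?thesis using True by (simp add: ennreal_leI)
    qed simp
  qed
  finally show ?thesis .
qed

lemma gauss_series_summable:
  "summable (\<lambda>k::nat. exp (- (real k)\<^sup>2 / 2) * (real k + 1) ^ d)"
proof (rule summable_ratio_test[where c = "1/2" and N = "2 ^ (d+1)"])
  fix k :: nat assume k: "2 ^ (d+1) \<le> k"
  have e: "exp (- (real (Suc k))\<^sup>2 / 2) = exp (- (real k)\<^sup>2 / 2) * exp (- (real k + 1/2))"
    by (simp add: exp_add[symmetric] power2_eq_square field_simps)
  have r: "(real (Suc k) + 1) ^ d \<le> 2 ^ d * (real k + 1) ^ d"
    by (simp add: power_mult_distrib[symmetric] power_mono)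
  have "(2::real) ^ (d+1) \<le> real k" using k by (metis of_nat_le_iff of_nat_numeral of_nat_power)
  also have "real k \<le> exp (real k + 1/2)" using exp_ge_add_one_self[of "real k + 1/2"] by linarith
  finally have "2 ^ d * exp (- (real k + 1/2)) \<le> 1/2"
    by (simp add: exp_minus field_simps)
  then have "(2 ^ d * exp (- (real k + 1/2))) * (real k + 1) ^ d \<le> 1/2 * (real k + 1) ^ d"
    by (intro mult_right_mono) auto
  then have "exp (- (real k + 1/2)) * (2 ^ d * (real k + 1) ^ d) \<le> 1/2 * (real k + 1) ^ d"
    by (simp add: mult_ac)
  moreover have "exp (- (real k + 1/2)) * (real (Suc k) + 1) ^ d \<le> exp (- (real k + 1/2)) * (2 ^ d * (real k + 1) ^ d)"
    using r by (intro mult_left_mono) auto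
  ultimately have "exp (- (real k + 1/2)) * (real (Suc k) + 1) ^ d \<le> 1/2 * (real k + 1) ^ d"
    by linarith
  then show "norm (exp (- (real (Suc k))\<^sup>2 / 2) * (real (Suc k) + 1) ^ d)
         \<le> 1/2 * norm (exp (- (real k)\<^sup>2 / 2) * (real k + 1) ^ d)"
    unfolding e by (simp add: abs_mult mult_left_mono algebra_simps)
qed simp

lemma gauss_upper:
  fixes h :: real assumes h: "0 < h"
  shows "(\<integral>\<^sup>+ (z::'a::euclidean_space). ennreal (exp (- (norm z)\<^sup>2 / (2*h))) \<partial>lborel)
     \<le> ennreal ((\<Sum>k. exp (- (real k)\<^sup>2 / 2) * (real k + 1) ^ DIM('a)) * unit_ball_vol DIM('a) * sqrt h ^ DIM('a))"
proof -
  let ?f = "\<lambda>k z. ennreal (exp (- (real k)\<^sup>2 / 2)) * indicator (ball (0::'a) ((real k + 1) * sqrt h)) z"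
  have "(\<integral>\<^sup>+ (z::'a). ennreal (exp (- (norm z)\<^sup>2 / (2*h))) \<partial>lborel) \<le> (\<integral>\<^sup>+ z. (\<Sum>k. ?f k z) \<partial>lborel)"
  proof (intro nn_integral_mono)
    fix z :: 'a
    define k0 where "k0 = nat \<lfloor>norm z / sqrt h\<rfloor>"
    have sh: "sqrt h > 0" using h by simp
    have k0le: "real k0 \<le> norm z / sqrt h" unfolding k0_def
      using sh by (simp add: of_nat_nat)
    have k0gt: "norm z / sqrt h < real k0 + 1"
    proof -
      have x0: "0 \<le> norm z / sqrt h" using sh by simp
      have "norm z / sqrt h < of_int \<lfloor>norm z / sqrt h\<rfloor> + 1"
        using floor_correct[of "norm z / sqrt h"] by simp
      then show ?thesis using x0 by (simp add: of_nat_nat k0_def)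
    qed
    then have inb: "z \<in> ball 0 ((real k0 + 1) * sqrt h)" using sh by (simp add: field_simps)
    have "(real k0)\<^sup>2 \<le> (norm z / sqrt h)\<^sup>2" using k0le by (intro power_mono) auto
    then have "(real k0)\<^sup>2 \<le> (norm z)\<^sup>2 / h" using h by (simp add: power_divide)
    then have "- (norm z)\<^sup>2 / (2*h) \<le> - (real k0)\<^sup>2 / 2" using h by (simp add: field_simps)
    then have "ennreal (exp (- (norm z)\<^sup>2 / (2*h))) \<le> ?f k0 z" using inb by (simp add: ennreal_leI)
    also have "\<dots> \<le> (\<Sum>k. ?f k z)"
    proof -
      have "\<not> (\<Sum>k. ?f k z) < ?f k0 z"
        using ennreal_suminf_lessD[of "\<lambda>k. ?f k z" "?f k0 z" k0] by auto
      then show ?thesis by (simp add: not_less)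
    qed
    finally show "ennreal (exp (- (norm z)\<^sup>2 / (2*h))) \<le> (\<Sum>k. ?f k z)" .
  qed
  also have "\<dots> = (\<Sum>k. \<integral>\<^sup>+ z. ?f k z \<partial>lborel)" by (rule nn_integral_suminf, intro borel_measurable_times_ennreal borel_measurable_const borel_measurable_indicator, simp only: sets_lborel, intro borel_open open_ball)
  also have "\<dots> = (\<Sum>k. ennreal ((exp (- (real k)\<^sup>2 / 2) * (real k + 1) ^ DIM('a)) * (unit_ball_vol DIM('a) * sqrt h ^ DIM('a))))"
    by (intro suminf_cong, subst nn_integral_cmult_indicator)
       (use h in \<open>auto simp: emeasure_ball ennreal_mult'[symmetric] power_mult_distrib mult_ac\<close>)
  also have "\<dots> = ennreal (\<Sum>k. (exp (- (real k)\<^sup>2 / 2) * (real k + 1) ^ DIM('a)) * (unit_ball_vol DIM('a) * sqrt h ^ DIM('a)))"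
  proof (rule suminf_ennreal2)
    show "summable (\<lambda>k. (exp (- (real k)\<^sup>2 / 2) * (real k + 1) ^ DIM('a)) * (unit_ball_vol DIM('a) * sqrt h ^ DIM('a)))"
      by (intro summable_mult2 gauss_series_summable)
  qed (use h in auto)
  also have "\<dots> = ennreal ((\<Sum>k. exp (- (real k)\<^sup>2 / 2) * (real k + 1) ^ DIM('a)) * unit_ball_vol DIM('a) * sqrt h ^ DIM('a))"
    using gauss_series_summable[of "DIM('a)"]
    by (subst suminf_mult2[symmetric]) (auto simp: mult.assoc[symmetric])
  finally show ?thesis .
qed

lemma lborel_reflect: "distr lborel borel (\<lambda>z. x - z) = (lborel :: 'a::euclidean_space measure)"
proof -
  have "(lborel :: 'a measure) = density (distr lborel borel (\<lambda>z. x + (-1) *\<^sub>R z)) (\<lambda>_. \<bar>-1::real\<bar> ^ DIM('a))"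
    by (rule lborel_affine) simp
  then show ?thesis by (simp add: density_1)
qed

lemma lborel_shift: "distr lborel borel (\<lambda>z. z - y) = (lborel :: 'a::euclidean_space measure)"
proof -
  have "(\<lambda>z. z - y) = (+) (-y)" by (rule ext) simp
  then show ?thesis using lborel_distr_plus[of "-y"] by simp
qed

lemma nn_integral_shift:
  fixes f :: "'a::euclidean_space \<Rightarrow> ennreal"
  assumes f: "f \<in> borel_measurable borel"
  shows "(\<integral>\<^sup>+ x. f (x - y) \<partial>lborel) = (\<integral>\<^sup>+ x. f x \<partial>lborel)"
proof -
  have "(\<integral>\<^sup>+ x. f x \<partial>lborel) = (\<integral>\<^sup>+ x. f x \<partial>distr lborel borel (\<lambda>z. z - y))"
    by (simp add: lborel_shift)
  also have "\<dots> = (\<integral>\<^sup>+ x. f (x - y) \<partial>lborel)"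
    using f by (intro nn_integral_distr) auto
  finally show ?thesis by simp
qed

lemma SB_subst:
  fixes q :: "real^'n \<Rightarrow> complex"
  assumes q[measurable]: "q \<in> borel_measurable borel"
  shows "SB_transform h q x = (\<integral> z. exp (- (norm z)\<^sup>2 / (2*h)) *\<^sub>R q (x - z) \<partial>lborel)"
proof -
  have "SB_transform h q x = (\<integral> y. exp (- (norm (x - y))\<^sup>2 / (2 * h)) *\<^sub>R q y \<partial>lborel)"
    unfolding SB_transform_def by (intro integral_completion) measurable
  also have "\<dots> = (\<integral> y. exp (- (norm (x - y))\<^sup>2 / (2 * h)) *\<^sub>R q y \<partial>distr lborel borel (\<lambda>z. x - z))"
    by (simp add: lborel_reflect)
  also have "\<dots> = (\<integral> z. exp (- (norm z)\<^sup>2 / (2*h)) *\<^sub>R q (x - z) \<partial>lborel)"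
    by (subst integral_distr) auto
  finally show ?thesis .
qed

lemma SB_meas:
  fixes q :: "real^'n \<Rightarrow> complex"
  assumes q[measurable]: "q \<in> borel_measurable borel"
  shows "SB_transform h q \<in> borel_measurable borel"
proof -
  have "(\<lambda>x. \<integral> z. exp (- (norm z)\<^sup>2 / (2*h)) *\<^sub>R q (x - z) \<partial>lborel) \<in> borel_measurable borel"
    by measurable
  then show ?thesis by (simp add: SB_subst[OF q, abs_def])
qed

lemma jensen_nn:
  fixes \<phi> F :: "'a \<Rightarrow> real" and p a :: real
  assumes \<phi>m[measurable]: "\<phi> \<in> borel_measurable M" and Fm[measurable]: "F \<in> borel_measurable M"
    and \<phi>0: "\<And>x. 0 \<le> \<phi> x" and F0: "\<And>x. 0 \<le> F x" and \<phi>1: "(\<integral>\<^sup>+ x. ennreal (\<phi> x) \<partial>M) = 1"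
    and p: "1 \<le> p" and a0: "0 \<le> a" and a: "ennreal a \<le> (\<integral>\<^sup>+ x. ennreal (\<phi> x * F x) \<partial>M)"
  shows "ennreal (a powr p) \<le> (\<integral>\<^sup>+ x. ennreal (\<phi> x * F x powr p) \<partial>M)"
proof (cases "a = 0")
  case True then show ?thesis by simp
next
  case False
  then have apos: "0 < a" using a0 by simp
  show ?thesis
  proof (cases "(\<integral>\<^sup>+ x. ennreal (\<phi> x * F x) \<partial>M) = \<infinity>")
    case True
    have "(\<integral>\<^sup>+ x. ennreal (\<phi> x * F x) \<partial>M) \<le> (\<integral>\<^sup>+ x. ennreal (\<phi> x) + ennreal (\<phi> x * F x powr p) \<partial>M)"
    proof (intro nn_integral_mono)
      fix x
      have "F x \<le> 1 + F x powr p"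
      proof (cases "F x \<le> 1")
        case True then show ?thesis using powr_ge_zero[of "F x" p] by linarith
      next
        case False
        then have "F x powr 1 \<le> F x powr p" using p by (intro powr_mono) auto
        then show ?thesis using False by simp
      qed
      then have "\<phi> x * F x \<le> \<phi> x * (1 + F x powr p)" using \<phi>0[of x] by (intro mult_left_mono) auto
      then show "ennreal (\<phi> x * F x) \<le> ennreal (\<phi> x) + ennreal (\<phi> x * F x powr p)"
        using \<phi>0[of x] by (simp add: ennreal_plus[symmetric] distrib_left del: ennreal_plus)
    qed
    also have "\<dots> = 1 + (\<integral>\<^sup>+ x. ennreal (\<phi> x * F x powr p) \<partial>M)"
      by (subst nn_integral_add) (auto simp: \<phi>1)
    finally have "(\<integral>\<^sup>+ x. ennreal (\<phi> x * F x powr p) \<partial>M) = \<infinity>"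
      using True by (simp add: top_unique ennreal_add_eq_top)
    then show ?thesis by simp
  next
    case False
    then obtain m where m: "(\<integral>\<^sup>+ x. ennreal (\<phi> x * F x) \<partial>M) = ennreal m" and m0: "0 \<le> m"
      by (cases "(\<integral>\<^sup>+ x. ennreal (\<phi> x * F x) \<partial>M)" rule: ennreal_cases) auto
    have am: "a \<le> m" using a m m0 by (simp add: ennreal_le_iff)
    then have mpos: "0 < m" using apos by simp
    have "(\<integral>\<^sup>+ x. ennreal (\<phi> x * (m powr p + p * m powr (p-1) * F x)) \<partial>M)
        \<le> (\<integral>\<^sup>+ x. ennreal (\<phi> x * (F x powr p + p * m powr p)) \<partial>M)"
    proof (intro nn_integral_mono ennreal_leI mult_left_mono[OF _ \<phi>0])
      fix x
      have t: "m powr p + p * m powr (p-1) * (F x - m) \<le> F x powr p"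
        by (rule tangent_powr[OF F0 mpos p])
      have "m powr (p-1) * m = m powr p" using mpos by (simp add: powr_diff)
      then show "m powr p + p * m powr (p-1) * F x \<le> F x powr p + p * m powr p"
        using t by (simp add: algebra_simps)
    qed
    also have "\<dots> = (\<integral>\<^sup>+ x. ennreal (\<phi> x * F x powr p) + ennreal (p * m powr p) * ennreal (\<phi> x) \<partial>M)"
      using \<phi>0 p mpos
      by (intro nn_integral_cong) (simp add: ennreal_plus[symmetric] ennreal_mult'[symmetric] algebra_simps del: ennreal_plus)
    also have "\<dots> = (\<integral>\<^sup>+ x. ennreal (\<phi> x * F x powr p) \<partial>M) + ennreal (p * m powr p)"
      by (subst nn_integral_add) (auto simp: nn_integral_cmult \<phi>1)
    finally have 1: "(\<integral>\<^sup>+ x. ennreal (\<phi> x * (m powr p + p * m powr (p-1) * F x)) \<partial>M)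
        \<le> (\<integral>\<^sup>+ x. ennreal (\<phi> x * F x powr p) \<partial>M) + ennreal (p * m powr p)" .
    have "(\<integral>\<^sup>+ x. ennreal (\<phi> x * (m powr p + p * m powr (p-1) * F x)) \<partial>M)
        = (\<integral>\<^sup>+ x. ennreal (m powr p) * ennreal (\<phi> x) + ennreal (p * m powr (p-1)) * ennreal (\<phi> x * F x) \<partial>M)"
      using \<phi>0 F0 p mpos
      by (intro nn_integral_cong) (simp add: ennreal_plus[symmetric] ennreal_mult'[symmetric] algebra_simps del: ennreal_plus)
    also have "\<dots> = ennreal (m powr p) + ennreal (p * m powr (p-1)) * ennreal m"
      by (subst nn_integral_add) (auto simp: nn_integral_cmult \<phi>1 m)
    also have "\<dots> = ennreal (p * m powr p) + ennreal (m powr p)"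
    proof -
      have "m powr (p-1) * m = m powr p" using mpos by (simp add: powr_diff)
      then show ?thesis using mpos p by (simp add: ennreal_mult'[symmetric] mult.assoc add.commute)
    qed
    finally have "ennreal (p * m powr p) + ennreal (m powr p) \<le> ennreal (p * m powr p) + (\<integral>\<^sup>+ x. ennreal (\<phi> x * F x powr p) \<partial>M)"
      using 1 by (simp add: add.commute)
    then have "ennreal (m powr p) \<le> (\<integral>\<^sup>+ x. ennreal (\<phi> x * F x powr p) \<partial>M)"
      by (simp add: ennreal_add_left_cancel_le)
    moreover have "a powr p \<le> m powr p" using am a0 p by (intro powr_mono2) auto
    ultimately show ?thesis using ennreal_leI order_trans by blast
  qed
qed

lemma pointwise_bound:
  fixes q :: "real^'n \<Rightarrow> complex" and h A :: real
  assumes q[measurable]: "q \<in> borel_measurable borel" and h: "0 < h"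
    and A: "(\<integral>\<^sup>+ z. ennreal (exp (- (norm (z::real^'n))\<^sup>2/(2*h))) \<partial>lborel) = ennreal A" and Apos: "0 < A"
  shows "ennreal (norm (q x - (1/A) *\<^sub>R SB_transform h q x))
     \<le> (\<integral>\<^sup>+ z. ennreal (exp (- (norm z)\<^sup>2/(2*h)) / A * norm (q x - q (x - z))) \<partial>lborel)"
proof -
  define g where "g = (\<lambda>z::real^'n. exp (- (norm z)\<^sup>2/(2*h)))"
  have gm[measurable]: "g \<in> borel_measurable borel" unfolding g_def by measurable
  have gpos: "\<And>z. 0 < g z" unfolding g_def by simp
  have gint: "integrable lborel g"
    unfolding integrable_iff_bounded using A gpos by (simp add: g_def)
  have gI: "(\<integral> z. g z \<partial>lborel) = A"
  proof -
    have "(\<integral>\<^sup>+ z. ennreal (g z) \<partial>lborel) = ennreal (\<integral> z. g z \<partial>lborel)"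
      using gint gpos by (intro nn_integral_eq_integral) (auto intro: less_imp_le)
    then have "ennreal A = ennreal (\<integral> z. g z \<partial>lborel)" using A by (simp add: g_def)
    moreover have "0 \<le> (\<integral> z. g z \<partial>lborel)" using gpos by (intro Bochner_Integration.integral_nonneg) (auto intro: less_imp_le)
    ultimately show ?thesis using Apos by (simp add: ennreal_inj)
  qed
  have SB: "SB_transform h q x = (\<integral> z. g z *\<^sub>R q (x - z) \<partial>lborel)"
    using SB_subst[OF q] by (simp add: g_def)
  have nD: "\<And>z. norm ((g z / A) *\<^sub>R (q x - q (x - z))) = g z / A * norm (q x - q (x - z))"
    using gpos Apos by (simp add: less_imp_le)
  show ?thesis
  proof (cases "integrable lborel (\<lambda>z. g z *\<^sub>R q (x - z))")
    case True
    have i1: "integrable lborel (\<lambda>z. g z *\<^sub>R q x)" using gint by simp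
    have "(\<integral> z. (g z / A) *\<^sub>R (q x - q (x - z)) \<partial>lborel)
        = (\<integral> z. (1/A) *\<^sub>R (g z *\<^sub>R q x - g z *\<^sub>R q (x - z)) \<partial>lborel)"
      by (simp add: scaleR_diff_right)
    also have "\<dots> = (1/A) *\<^sub>R ((\<integral> z. g z *\<^sub>R q x \<partial>lborel) - (\<integral> z. g z *\<^sub>R q (x - z) \<partial>lborel))"
      using True i1 by simp
    also have "\<dots> = q x - (1/A) *\<^sub>R SB_transform h q x"
      using gint Apos by (simp add: gI SB scaleR_diff_right)
    finally have eq: "q x - (1/A) *\<^sub>R SB_transform h q x = (\<integral> z. (g z / A) *\<^sub>R (q x - q (x - z)) \<partial>lborel)" by simp
    have "integrable lborel (\<lambda>z. (g z / A) *\<^sub>R (q x - q (x - z)))"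
    proof -
      have "integrable lborel (\<lambda>z. (1/A) *\<^sub>R (g z *\<^sub>R q x - g z *\<^sub>R q (x - z)))"
        using True i1 by simp
      then show ?thesis by (simp add: scaleR_diff_right)
    qed
    then have "norm (q x - (1/A) *\<^sub>R SB_transform h q x) \<le> (\<integral>\<^sup>+z. norm ((g z / A) *\<^sub>R (q x - q (x - z))) \<partial>lborel)"
      unfolding eq by (rule integral_norm_bound_ennreal)
    then show ?thesis using Apos by (simp add: g_def abs_of_pos)
  next
    case False
    have "(\<integral>\<^sup>+ z. ennreal (g z / A * norm (q x - q (x - z))) \<partial>lborel) = \<infinity>"
    proof (rule ccontr)
      assume "(\<integral>\<^sup>+ z. ennreal (g z / A * norm (q x - q (x - z))) \<partial>lborel) \<noteq> \<infinity>"
      then have ifin: "integrable lborel (\<lambda>z. (g z / A) *\<^sub>R (q x - q (x - z)))"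
        unfolding integrable_iff_bounded using Apos gpos by (simp add: nD top.not_eq_extremum abs_of_pos)
      have i2: "integrable lborel (\<lambda>z. A *\<^sub>R ((g z / A) *\<^sub>R (q x - q (x - z))))"
        by (rule integrable_scaleR_right) (rule ifin)
      have i1: "integrable lborel (\<lambda>z. g z *\<^sub>R q x)" using gint by simp
      have "integrable lborel (\<lambda>z. g z *\<^sub>R q x - A *\<^sub>R ((g z / A) *\<^sub>R (q x - q (x - z))))"
        by (rule Bochner_Integration.integrable_diff[OF i1 i2])
      moreover have "(\<lambda>z. g z *\<^sub>R q x - A *\<^sub>R ((g z / A) *\<^sub>R (q x - q (x - z)))) = (\<lambda>z. g z *\<^sub>R q (x - z))"
        using Apos by (auto simp: scaleR_diff_right)
      ultimately show False using False by simp
    qed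
    then show ?thesis by (simp add: g_def)
  qed
qed

lemma sq_powr: "0 \<le> (x::real) \<Longrightarrow> (x\<^sup>2) powr (s/2) = x powr s"
proof (cases "x = 0")
  case False
  assume "0 \<le> x"
  then have x: "0 < x" using False by simp
  have "x\<^sup>2 = x powr 2" using x by (simp add: powr_realpow)
  then have "x\<^sup>2 powr (s/2) = (x powr 2) powr (s/2)" by simp
  also have "\<dots> = x powr (2 * (s/2))" by (rule powr_powr)
  finally show ?thesis by simp
qed simp

lemma weight_bound:
  fixes r h p lam n :: real
  assumes r: "0 < r" and h: "0 < h" and p: "1 \<le> p" and lam: "0 < lam" "lam \<le> 1" and n: "1 \<le> n"
  shows "exp (- ((p+1) * r\<^sup>2 / (4*h))) * r powr (n + lam*p) \<le> (2*(n+1)) powr ((n+1)*p/2) * h powr ((n + lam*p)/2)"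
proof -
  define s where "s = n + lam * p"
  define u where "u = r\<^sup>2 / h"
  have s0: "0 < s" using n lam p unfolding s_def by (simp add: add_pos_nonneg)
  have u0: "0 \<le> u" unfolding u_def using h by simp
  have ru: "r\<^sup>2 = u * h" unfolding u_def using h by simp
  have "r powr s = (r\<^sup>2) powr (s/2)" using sq_powr[of r s] r by simp
  also have "\<dots> = (u * h) powr (s/2)" by (simp only: ru)
  also have "\<dots> = u powr (s/2) * h powr (s/2)" using u0 h by (simp add: powr_mult)
  finally have rs: "r powr s = u powr (s/2) * h powr (s/2)" .
  have "(p+1) * r\<^sup>2 / (4*h) = ((p+1)/4) * u" unfolding u_def by simp
  then have e: "exp (- ((p+1) * r\<^sup>2 / (4*h))) = exp (- (((p+1)/4) * u))" by (rule arg_cong[where f="\<lambda>t. exp (- t)"])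
  have "u powr (s/2) * exp (- (((p+1)/4) * u)) \<le> ((s/2) / ((p+1)/4)) powr (s/2)"
    using u0 s0 p by (intro upow_exp_bound) auto
  also have "\<dots> \<le> (2*(n+1)) powr (s/2)"
  proof (intro powr_mono2)
    have "lam * p \<le> p" using lam p by simp
    moreover have "0 \<le> n * p" using n p by simp
    moreover have "(n+1)*(p+1) = n*p + n + p + 1" by (simp add: algebra_simps)
    ultimately have "s \<le> (n+1)*(p+1)" unfolding s_def by linarith
    moreover have "(s/2) / ((p+1)/4) = (2 * s) / (p + 1)" by simp
    moreover have "(2 * s) / (p + 1) \<le> 2*(n+1)" using p \<open>s \<le> (n+1)*(p+1)\<close>
      by (subst pos_divide_le_eq) (auto simp: algebra_simps)
    ultimately show "(s/2) / ((p+1)/4) \<le> 2*(n+1)" by simp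
  qed (use s0 p in auto)
  also have "\<dots> \<le> (2*(n+1)) powr ((n+1)*p/2)"
  proof (intro powr_mono)
    have "lam * p \<le> p" using lam p by simp
    moreover have "n \<le> n * p" using n p by simp
    ultimately show "s/2 \<le> (n+1)*p/2" unfolding s_def by (simp add: algebra_simps)
  qed (use n in auto)
  finally have "u powr (s/2) * exp (- (((p+1)/4) * u)) \<le> (2*(n+1)) powr ((n+1)*p/2)" .
  then have "(u powr (s/2) * exp (- (((p+1)/4) * u))) * h powr (s/2) \<le> (2*(n+1)) powr ((n+1)*p/2) * h powr (s/2)"
    by (rule mult_right_mono) simp
  then have "exp (- (((p+1)/4) * u)) * (u powr (s/2) * h powr (s/2)) \<le> (2*(n+1)) powr ((n+1)*p/2) * h powr (s/2)"
    by (simp add: mult_ac)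
  then have "exp (- ((p+1) * r\<^sup>2 / (4*h))) * r powr s \<le> (2*(n+1)) powr ((n+1)*p/2) * h powr (s/2)"
    by (simp only: e rs)
  then show ?thesis unfolding s_def .
qed

lemma integrand_bound:
  fixes r h p lam n d A B :: real
  assumes h: "0 < h" and p: "1 \<le> p" and lam: "0 < lam" "lam \<le> 1" and n: "1 \<le> n"
    and A: "0 < A" and B: "0 < B" and d: "0 \<le> d" and rd: "0 < r \<or> d = 0" and r0: "0 \<le> r"
  shows "exp (- r\<^sup>2 / (4*h)) / B * (exp (- r\<^sup>2 / (4*h) + ln B - ln A) * d) powr p
    \<le> (B powr (p-1) / A powr p * (2*(n+1)) powr ((n+1)*p/2) * h powr ((n + lam*p)/2)) * (d powr p / r powr (n + lam*p))"
proof (cases "d = 0")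
  case True
  then show ?thesis by simp
next
  case False
  then have r: "0 < r" and dpos: "0 < d" using rd d by auto
  define t where "t = r\<^sup>2 / (4*h)"
  have t1: "- r\<^sup>2 / (4*h) = - t" unfolding t_def by simp
  have t2: "(p+1) * r\<^sup>2 / (4*h) = (p+1) * t" unfolding t_def by simp
  have pa: "A powr p = exp (p * ln A)" using A by (simp add: powr_def mult.commute)
  have pb: "B powr (p-1) = exp ((p-1) * ln B)" using B by (simp add: powr_def mult.commute)
  have "(exp (- t + ln B - ln A) * d) powr p = exp (- t + ln B - ln A) powr p * d powr p"
    using dpos by (simp add: powr_mult)
  also have "exp (- t + ln B - ln A) powr p = exp (p * (- t + ln B - ln A))"
    by (simp add: powr_def)
  finally have e1: "(exp (- t + ln B - ln A) * d) powr p = exp (p * (- t + ln B - ln A)) * d powr p" .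
  have "exp (- t) / B * (exp (- t + ln B - ln A) * d) powr p
      = exp (- t - ln B + p * (- t + ln B - ln A)) * d powr p"
    using B by (subst e1) (simp add: exp_diff exp_add)
  also have "- t - ln B + p * (- t + ln B - ln A) = - ((p+1) * t) + ((p-1) * ln B - p * ln A)"
    by (simp add: algebra_simps)
  also have "exp (- ((p+1) * t) + ((p-1) * ln B - p * ln A)) = exp (- ((p+1) * t)) * (B powr (p-1) / A powr p)"
    by (simp add: exp_add exp_diff pa pb exp_minus field_simps)
  finally have eq: "exp (- t) / B * (exp (- t + ln B - ln A) * d) powr p
      = exp (- ((p+1) * t)) * (B powr (p-1) / A powr p) * d powr p" .
  have rp: "0 < r powr (n + lam*p)" using r by simp
  have w: "exp (- ((p+1) * t)) \<le> (2*(n+1)) powr ((n+1)*p/2) * h powr ((n + lam*p)/2) / r powr (n + lam*p)"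
    using weight_bound[OF r h p lam n] unfolding t2 by (subst pos_le_divide_eq[OF rp])
  have c0: "0 \<le> B powr (p-1) / A powr p * d powr p" by simp
  have "exp (- ((p+1) * t)) * (B powr (p-1) / A powr p * d powr p)
     \<le> ((2*(n+1)) powr ((n+1)*p/2) * h powr ((n + lam*p)/2) / r powr (n + lam*p)) * (B powr (p-1) / A powr p * d powr p)"
    using w c0 by (rule mult_right_mono)
  then show ?thesis unfolding t1 eq by (simp add: mult_ac)
qed

lemma lp_int_UNIV: "lp_int p f UNIV = (\<integral>\<^sup>+ x. ennreal (norm (f x) powr p) \<partial>lborel)"
  unfolding lp_int_def by (simp add: nn_integral_completion)

lemma pw_diff_powr:
  fixes a b :: complex and p :: real assumes p: "0 < p"
  shows "norm (a - b) powr p \<le> 2 powr p * (norm a powr p + norm b powr p)"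
proof -
  have "norm (a - b) \<le> norm a + norm b" by (rule norm_triangle_ineq4)
  moreover have "norm a \<le> max (norm a) (norm b)" "norm b \<le> max (norm a) (norm b)" by auto
  ultimately have "norm (a - b) \<le> 2 * max (norm a) (norm b)" by linarith
  then have "norm (a - b) powr p \<le> (2 * max (norm a) (norm b)) powr p"
    using p by (intro powr_mono2) auto
  also have "\<dots> = 2 powr p * max (norm a) (norm b) powr p" by (simp add: powr_mult)
  also have "max (norm a) (norm b) powr p \<le> norm a powr p + norm b powr p"
    by (cases "norm a \<le> norm b") (auto simp: max_def)
  then have "2 powr p * max (norm a) (norm b) powr p \<le> 2 powr p * (norm a powr p + norm b powr p)"
    by (intro mult_left_mono) auto
  finally show ?thesis .
qed

lemma lp_diff_fin:
  fixes q :: "real^'n \<Rightarrow> complex"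
  assumes q[measurable]: "q \<in> borel_measurable borel" and p: "0 < p" and fin: "lp_int p q UNIV < \<infinity>"
  shows "(\<integral>\<^sup>+ x. ennreal (norm (q x - q (x - z)) powr p) \<partial>lborel) < \<infinity>"
proof -
  have I: "(\<integral>\<^sup>+ x. ennreal (norm (q x) powr p) \<partial>lborel) < \<infinity>" using fin by (simp add: lp_int_UNIV)
  have I2: "(\<integral>\<^sup>+ x. ennreal (norm (q (x - z)) powr p) \<partial>lborel) = (\<integral>\<^sup>+ x. ennreal (norm (q x) powr p) \<partial>lborel)"
    by (rule nn_integral_shift[where f="\<lambda>x. ennreal (norm (q x) powr p)"]) measurable
  have "(\<integral>\<^sup>+ x. ennreal (norm (q x - q (x - z)) powr p) \<partial>lborel)
      \<le> (\<integral>\<^sup>+ x. ennreal (2 powr p) * (ennreal (norm (q x) powr p) + ennreal (norm (q (x - z)) powr p)) \<partial>lborel)"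
    using pw_diff_powr[OF p]
    by (intro nn_integral_mono) (simp add: ennreal_plus[symmetric] ennreal_mult'[symmetric] ennreal_leI del: ennreal_plus)
  also have "\<dots> = ennreal (2 powr p) * ((\<integral>\<^sup>+ x. ennreal (norm (q x) powr p) \<partial>lborel) + (\<integral>\<^sup>+ x. ennreal (norm (q (x - z)) powr p) \<partial>lborel))"
    by (subst nn_integral_cmult) (auto simp: nn_integral_add)
  also have "\<dots> < \<infinity>" using I unfolding I2 by (simp add: ennreal_mult_less_top)
  finally show ?thesis .
qed

lemma exp_combine:
  fixes u A B :: real assumes "0 < A" "0 < B"
  shows "exp u / B * exp (u + ln B - ln A) = exp (2*u) / A"
proof -
  have "exp (u + ln B - ln A) = exp u * B / A" using assms by (simp add: exp_add exp_diff)
  moreover have "exp (2*u) = exp u * exp u" by (simp add: exp_add[symmetric])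
  ultimately show ?thesis using assms by (simp add: field_simps)
qed

lemma main_est:
  fixes q :: "real^'n \<Rightarrow> complex" and p lam h A B :: real
  assumes q[measurable]: "q \<in> borel_measurable borel" and p: "1 \<le> p" and lam: "0 < lam" "lam \<le> 1" and h: "0 < h"
    and fin: "lp_int p q UNIV < \<infinity>"
    and A: "(\<integral>\<^sup>+ z. ennreal (exp (- (norm (z::real^'n))\<^sup>2/(2*h))) \<partial>lborel) = ennreal A" and Apos: "0 < A"
    and B: "(\<integral>\<^sup>+ z. ennreal (exp (- (norm (z::real^'n))\<^sup>2/(4*h))) \<partial>lborel) = ennreal B" and Bpos: "0 < B"
  shows "lp_int p (\<lambda>x. q x - (1/A) *\<^sub>R SB_transform h q x) UNIV
     \<le> ennreal (B powr (p-1) / A powr p * (2*(real CARD('n)+1)) powr ((real CARD('n)+1)*p/2) * h powr ((real CARD('n) + lam*p)/2)) * Lq_int p lam q"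
proof -
  define n where "n = real CARD('n)"
  define Q where "Q = B powr (p-1) / A powr p * (2*(n+1)) powr ((n+1)*p/2) * h powr ((n + lam*p)/2)"
  define s where "s = n + lam*p"
  have "0 < CARD('n)" by simp
  then have n1: "1 \<le> n" unfolding n_def by linarith
  have Q0: "0 \<le> Q" unfolding Q_def by simp
  have pt: "ennreal (norm (q x - (1/A) *\<^sub>R SB_transform h q x) powr p)
      \<le> (\<integral>\<^sup>+ z. ennreal (Q * (norm (q x - q (x - z)) powr p / norm z powr s)) \<partial>lborel)" for x
  proof -
    define \<phi> where "\<phi> = (\<lambda>z::real^'n. exp (- (norm z)\<^sup>2/(4*h)) / B)"
    define F where "F = (\<lambda>z::real^'n. exp (- (norm z)\<^sup>2/(4*h) + ln B - ln A) * norm (q x - q (x - z)))"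
    have \<phi>m[measurable]: "\<phi> \<in> borel_measurable lborel" unfolding \<phi>_def by measurable
    have Fm[measurable]: "F \<in> borel_measurable lborel" unfolding F_def by measurable
    have \<phi>1: "(\<integral>\<^sup>+ z. ennreal (\<phi> z) \<partial>lborel) = 1"
    proof -
      have "(\<integral>\<^sup>+ z. ennreal (\<phi> z) \<partial>lborel) = (\<integral>\<^sup>+ z. ennreal (exp (- (norm (z::real^'n))\<^sup>2/(4*h))) * ennreal (1/B) \<partial>lborel)"
        unfolding \<phi>_def by (intro nn_integral_cong) (use Bpos in \<open>simp add: ennreal_mult''[symmetric]\<close>)
      also have "\<dots> = ennreal B * ennreal (1/B)" by (subst nn_integral_multc, measurable, simp only: B)
      also have "\<dots> = 1" using Bpos by (simp add: ennreal_mult''[symmetric])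
      finally show ?thesis .
    qed
    have eqz: "\<phi> z * F z = exp (- (norm z)\<^sup>2/(2*h)) / A * norm (q x - q (x - z))" for z
    proof -
      have "\<phi> z * F z = (exp (- (norm z)\<^sup>2/(4*h)) / B * exp (- (norm z)\<^sup>2/(4*h) + ln B - ln A)) * norm (q x - q (x - z))"
        unfolding \<phi>_def F_def by (simp add: mult.assoc)
      also have "exp (- (norm z)\<^sup>2/(4*h)) / B * exp (- (norm z)\<^sup>2/(4*h) + ln B - ln A) = exp (2 * (- (norm z)\<^sup>2/(4*h))) / A"
        by (rule exp_combine[OF Apos Bpos])
      also have "2 * (- (norm z)\<^sup>2/(4*h)) = - (norm z)\<^sup>2/(2*h)" by simp
      finally show ?thesis .
    qed
    have a: "ennreal (norm (q x - (1/A) *\<^sub>R SB_transform h q x)) \<le> (\<integral>\<^sup>+ z. ennreal (\<phi> z * F z) \<partial>lborel)"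
      unfolding eqz by (rule pointwise_bound[OF q h A Apos])
    have "ennreal (norm (q x - (1/A) *\<^sub>R SB_transform h q x) powr p) \<le> (\<integral>\<^sup>+ z. ennreal (\<phi> z * F z powr p) \<partial>lborel)"
      by (rule jensen_nn[OF \<phi>m Fm _ _ \<phi>1 p _ a]) (use Bpos in \<open>auto simp: \<phi>_def F_def\<close>)
    also have "\<dots> \<le> (\<integral>\<^sup>+ z. ennreal (Q * (norm (q x - q (x - z)) powr p / norm z powr s)) \<partial>lborel)"
    proof (intro nn_integral_mono ennreal_leI)
      fix z :: "real^'n"
      have rd: "0 < norm z \<or> norm (q x - q (x - z)) = 0" by (cases "z = 0") auto
      show "\<phi> z * F z powr p \<le> Q * (norm (q x - q (x - z)) powr p / norm z powr s)"
        unfolding \<phi>_def F_def Q_def s_def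
        by (rule integrand_bound[OF h p lam n1 Apos Bpos _ rd]) auto
    qed
    finally show ?thesis .
  qed
  have "lp_int p (\<lambda>x. q x - (1/A) *\<^sub>R SB_transform h q x) UNIV
      = (\<integral>\<^sup>+ x. ennreal (norm (q x - (1/A) *\<^sub>R SB_transform h q x) powr p) \<partial>lborel)"
    by (rule lp_int_UNIV)
  also have "\<dots> \<le> (\<integral>\<^sup>+ x. \<integral>\<^sup>+ z. ennreal (Q * (norm (q x - q (x - z)) powr p / norm z powr s)) \<partial>lborel \<partial>lborel)"
    by (intro nn_integral_mono pt)
  also have "\<dots> = (\<integral>\<^sup>+ z. \<integral>\<^sup>+ x. ennreal (Q * (norm (q x - q (x - z)) powr p / norm z powr s)) \<partial>lborel \<partial>lborel)"
    by (rule lborel_pair.Fubini'[symmetric]) measurable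
  also have "\<dots> = (\<integral>\<^sup>+ z. ennreal Q * (\<integral>\<^sup>+ x. ennreal (norm (q x - q (x - z)) powr p / norm z powr s) \<partial>lborel) \<partial>lborel)"
  proof (intro nn_integral_cong)
    fix z :: "real^'n"
    have "(\<integral>\<^sup>+ x. ennreal (Q * (norm (q x - q (x - z)) powr p / norm z powr s)) \<partial>lborel)
        = (\<integral>\<^sup>+ x. ennreal Q * ennreal (norm (q x - q (x - z)) powr p / norm z powr s) \<partial>lborel)"
      by (intro nn_integral_cong) (simp only: ennreal_mult'[OF Q0])
    also have "\<dots> = ennreal Q * (\<integral>\<^sup>+ x. ennreal (norm (q x - q (x - z)) powr p / norm z powr s) \<partial>lborel)"
      by (rule nn_integral_cmult) measurable
    finally show "(\<integral>\<^sup>+ x. ennreal (Q * (norm (q x - q (x - z)) powr p / norm z powr s)) \<partial>lborel)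
        = ennreal Q * (\<integral>\<^sup>+ x. ennreal (norm (q x - q (x - z)) powr p / norm z powr s) \<partial>lborel)" .
  qed
  also have "\<dots> = ennreal Q * (\<integral>\<^sup>+ z. \<integral>\<^sup>+ x. ennreal (norm (q x - q (x - z)) powr p / norm z powr s) \<partial>lborel \<partial>lborel)"
    by (rule nn_integral_cmult) measurable
  also have "(\<integral>\<^sup>+ z. \<integral>\<^sup>+ x. ennreal (norm (q x - q (x - z)) powr p / norm z powr s) \<partial>lborel \<partial>lborel) = Lq_int p lam q"
  proof -
    have "Lq_int p lam q = (\<integral>\<^sup>+ z. ennreal (enn2real (lp_int p (\<lambda>x. q x - q (x - z)) UNIV) / norm z powr s) \<partial>lborel)"
      unfolding Lq_int_def s_def n_def by (simp add: nn_integral_completion)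
    also have "\<dots> = (\<integral>\<^sup>+ z. \<integral>\<^sup>+ x. ennreal (norm (q x - q (x - z)) powr p / norm z powr s) \<partial>lborel \<partial>lborel)"
    proof (intro nn_integral_cong)
      fix z :: "real^'n"
      let ?X = "\<integral>\<^sup>+ x. ennreal (norm (q x - q (x - z)) powr p) \<partial>lborel"
      have Xf: "?X < \<infinity>" by (rule lp_diff_fin[OF q _ fin]) (use p in simp)
      have "(\<integral>\<^sup>+ x. ennreal (norm (q x - q (x - z)) powr p / norm z powr s) \<partial>lborel)
          = (\<integral>\<^sup>+ x. ennreal (norm (q x - q (x - z)) powr p) * ennreal (1 / norm z powr s) \<partial>lborel)"
        by (intro nn_integral_cong) (simp add: ennreal_mult'[symmetric])
      also have "\<dots> = ?X * ennreal (1 / norm z powr s)" by (rule nn_integral_multc) measurable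
      also have "\<dots> = ennreal (enn2real ?X / norm z powr s)"
        using Xf by (cases ?X rule: ennreal_cases) (auto simp: ennreal_mult'[symmetric])
      finally show "ennreal (enn2real (lp_int p (\<lambda>x. q x - q (x - z)) UNIV) / norm z powr s)
          = (\<integral>\<^sup>+ x. ennreal (norm (q x - q (x - z)) powr p / norm z powr s) \<partial>lborel)"
        by (simp add: lp_int_UNIV)
    qed
    finally show ?thesis by simp
  qed
  finally show ?thesis unfolding Q_def n_def .
qed

lemma powr_subadd:
  fixes x y r :: real assumes x: "0 \<le> x" and y: "0 \<le> y" and r: "0 < r" "r \<le> 1"
  shows "(x + y) powr r \<le> x powr r + y powr r"
proof (cases "x + y = 0")
  case True then show ?thesis using x y by simp
next
  case False
  then have s: "0 < x + y" using x y by simp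
  have key: "u * (x + y) powr (r - 1) \<le> u powr r" if u: "0 \<le> u" "u \<le> x + y" for u
  proof (cases "u = 0")
    case True then show ?thesis by simp
  next
    case False
    then have u0: "0 < u" using u by simp
    have "(x + y) powr (r - 1) \<le> u powr (r - 1)"
      using u0 u r by (intro powr_mono2') auto
    then have "u * (x + y) powr (r - 1) \<le> u * u powr (r - 1)" using u0 by (intro mult_left_mono) auto
    also have "u * u powr (r - 1) = u powr r" using u0 by (simp add: powr_diff)
    finally show ?thesis .
  qed
  have "(x + y) * (x + y) powr (r - 1) = (x + y) powr r" using s by (simp add: powr_diff)
  then have "(x + y) powr r = x * (x + y) powr (r - 1) + y * (x + y) powr (r - 1)"
    by (simp add: distrib_right)
  also have "\<dots> \<le> x powr r + y powr r"
    using key[of x] key[of y] x y by (intro add_mono) auto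
  finally show ?thesis .
qed

lemma sqrt_pow_powr: "0 < (h::real) \<Longrightarrow> sqrt h ^ d = h powr (real d / 2)"
proof -
  assume h: "0 < h"
  have "sqrt h ^ d = (h powr (1/2)) ^ d" using h by (simp add: powr_half_sqrt)
  also have "\<dots> = h powr (real d / 2)" using h by (simp add: powr_realpow[symmetric] powr_powr)
  finally show ?thesis .
qed

lemma Q_bound:
  fixes p h n lam A B Lo Ub :: real
  assumes p: "1 \<le> p" and h: "0 < h" and n: "1 \<le> n" and lam: "0 < lam"
    and Lo: "0 < Lo" and Ub: "0 < Ub" and A: "Lo * h powr (n/2) \<le> A" and B: "0 < B" "B \<le> Ub * (2*h) powr (n/2)"
  shows "B powr (p-1) / A powr p * (2*(n+1)) powr ((n+1)*p/2) * h powr ((n+lam*p)/2)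
     \<le> (max 1 Ub * 2 powr (n/2) * (2*(n+1)) powr ((n+1)/2) / Lo * h powr (lam/2)) powr p"
proof -
  define U1 where "U1 = max 1 Ub"
  define W where "W = 2*(n+1)"
  define K0 where "K0 = U1 * 2 powr (n/2) * W powr ((n+1)/2) / Lo"
  have W: "0 < W" unfolding W_def using n by simp
  have U1: "1 \<le> U1" "Ub \<le> U1" unfolding U1_def by auto
  have "0 < Lo * h powr (n/2)" using Lo h by simp
  then have Apos: "0 < A" using A by linarith
  have K0: "0 < K0" unfolding K0_def using U1 W Lo by simp
  have lnB: "ln B \<le> ln Ub + n/2 * ln 2 + n/2 * ln h"
  proof -
    have "ln B \<le> ln (Ub * (2*h) powr (n/2))" using B Ub h by (subst ln_le_cancel_iff) auto
    also have "\<dots> = ln Ub + n/2 * ln 2 + n/2 * ln h" using Ub h by (simp add: ln_mult ln_powr algebra_simps)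
    finally show ?thesis .
  qed
  have lnA: "ln Lo + n/2 * ln h \<le> ln A"
  proof -
    have "ln (Lo * h powr (n/2)) \<le> ln A" using A Lo h Apos by (subst ln_le_cancel_iff) auto
    then show ?thesis using Lo h by (simp add: ln_mult ln_powr)
  qed
  have lnU: "ln Ub \<le> ln U1" "0 \<le> ln U1" using U1 Ub by auto
  have lnK0: "ln K0 = ln U1 + n/2 * ln 2 + (n+1)/2 * ln W - ln Lo"
    unfolding K0_def using U1 W Lo by (simp add: ln_mult ln_div ln_powr)
  define L where "L = (p-1) * ln B - p * ln A + (n+1)*p/2 * ln W + (n+lam*p)/2 * ln h"
  define R where "R = p * (ln K0 + lam/2 * ln h)"
  have eL: "B powr (p-1) / A powr p * W powr ((n+1)*p/2) * h powr ((n+lam*p)/2) = exp L"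
    unfolding L_def using B Apos W h by (simp add: powr_def exp_add exp_diff mult.commute)
  have eR: "(K0 * h powr (lam/2)) powr p = exp R"
    unfolding R_def using K0 h by (simp add: powr_def ln_mult exp_add mult.commute)
  have t1: "(p-1) * ln B \<le> (p-1) * (ln Ub + n/2 * ln 2 + n/2 * ln h)"
    using lnB p by (intro mult_left_mono) auto
  have t2: "p * (ln Lo + n/2 * ln h) \<le> p * ln A" using lnA p by (intro mult_left_mono) auto
  have t3: "(p-1) * ln Ub \<le> p * ln U1"
  proof -
    have "(p-1) * ln Ub \<le> (p-1) * ln U1" using lnU p by (intro mult_left_mono) auto
    also have "\<dots> \<le> p * ln U1" using lnU by (simp add: algebra_simps)
    finally show ?thesis .
  qed
  have t4: "(p-1) * (n/2 * ln 2) \<le> p * (n/2 * ln 2)" using n by (simp add: algebra_simps)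
  have "L \<le> R"
  proof -
    have "L \<le> (p-1) * (ln Ub + n/2 * ln 2 + n/2 * ln h) - p * (ln Lo + n/2 * ln h) + (n+1)*p/2 * ln W + (n+lam*p)/2 * ln h"
      unfolding L_def using t1 t2 by linarith
    also have "\<dots> = (p-1) * ln Ub + (p-1) * (n/2 * ln 2) - p * ln Lo + (n+1)*p/2 * ln W + p * (lam/2 * ln h)"
      by (simp add: field_simps)
    also have "\<dots> \<le> p * ln U1 + p * (n/2 * ln 2) - p * ln Lo + (n+1)*p/2 * ln W + p * (lam/2 * ln h)"
      using t3 t4 by linarith
    also have "\<dots> = R" unfolding R_def lnK0 by (simp add: algebra_simps)
    finally show ?thesis .
  qed
  then show ?thesis unfolding U1_def[symmetric] W_def[symmetric] K0_def[symmetric] eL eR by simp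
qed

lemma borel_version:
  fixes q :: "'a::euclidean_space \<Rightarrow> complex"
  assumes qm[measurable]: "q \<in> borel_measurable lebesgue"
  obtains q' where "q' \<in> borel_measurable borel" "AE x in lborel. q x = q' x"
proof -
  have "(\<lambda>x. Re (q x)) \<in> borel_measurable (completion lborel)" by measurable
  from completion_ex_borel_measurable_real[OF this]
  obtain r where r: "r \<in> borel_measurable lborel" "AE x in lborel. Re (q x) = r x" by blast
  have "(\<lambda>x. Im (q x)) \<in> borel_measurable (completion lborel)" by measurable
  from completion_ex_borel_measurable_real[OF this]
  obtain i where i: "i \<in> borel_measurable lborel" "AE x in lborel. Im (q x) = i x" by blast
  have [measurable]: "r \<in> borel_measurable borel" "i \<in> borel_measurable borel" using r i by auto
  show ?thesis
  proof
    show "(\<lambda>x. complex_of_real (r x) + \<i> * complex_of_real (i x)) \<in> borel_measurable borel" by measurable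
    show "AE x in lborel. q x = complex_of_real (r x) + \<i> * complex_of_real (i x)"
      using r(2) i(2) by eventually_elim (simp add: complex_eq_iff)
  qed
qed

lemma AE_shift:
  fixes y :: "'a::euclidean_space"
  assumes "AE x in lborel. P x"
  shows "AE x in lborel. P (x - y)"
proof -
  from assms obtain N where N: "{x \<in> space lborel. \<not> P x} \<subseteq> N" "emeasure lborel N = 0" "N \<in> sets lborel"
    by (auto elim: AE_E)
  have Nb: "N \<in> sets borel" using N(3) by simp
  have "emeasure lborel ((\<lambda>x. x - y) -` N \<inter> space lborel) = emeasure (distr lborel borel (\<lambda>x. x - y)) N"
    using Nb by (subst emeasure_distr) auto
  also have "\<dots> = 0" using N(2) by (simp add: lborel_shift)
  finally have e0: "emeasure lborel ((\<lambda>x. x - y) -` N \<inter> space lborel) = 0" .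
  have mm: "(\<lambda>x::'a. x - y) \<in> borel_measurable borel" by measurable
  have "(\<lambda>x. x - y) -` N \<in> sets borel" using measurable_sets[OF mm Nb] by simp
  with e0 have null: "(\<lambda>x. x - y) -` N \<inter> space lborel \<in> null_sets lborel"
    by (auto simp: null_sets_def)
  show ?thesis
    by (rule AE_I'[OF null]) (use N(1) in auto)
qed

lemma transfer_lp:
  fixes q q' :: "real^'n \<Rightarrow> complex"
  assumes ae: "AE x in lborel. q x = q' x"
  shows "lp_int p q G = lp_int p q' G"
  unfolding lp_int_def nn_integral_completion
  by (intro nn_integral_cong_AE) (use ae in eventually_elim, simp)

lemma transfer_SB:
  fixes q q' :: "real^'n \<Rightarrow> complex"
  assumes qm[measurable]: "q \<in> borel_measurable lebesgue" and q'[measurable]: "q' \<in> borel_measurable borel"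
    and ae: "AE x in lborel. q x = q' x"
  shows "SB_transform h q = SB_transform h q'"
proof
  fix x
  have q'l[measurable]: "q' \<in> borel_measurable lebesgue"
    using measurable_completion[of q' lborel borel] q' by simp
  show "SB_transform h q x = SB_transform h q' x"
    unfolding SB_transform_def
  proof (rule integral_cong_AE)
    have e: "(\<lambda>y. exp (- (norm (x - y))\<^sup>2 / (2 * h))) \<in> borel_measurable lebesgue"
      by (intro measurable_completion) measurable
    show "(\<lambda>y. exp (- (norm (x - y))\<^sup>2 / (2 * h)) *\<^sub>R q y) \<in> borel_measurable lebesgue"
      by (intro borel_measurable_scaleR e qm)
    show "(\<lambda>y. exp (- (norm (x - y))\<^sup>2 / (2 * h)) *\<^sub>R q' y) \<in> borel_measurable lebesgue"
      by (intro borel_measurable_scaleR e q'l)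
    show "AE y in lebesgue. exp (- (norm (x - y))\<^sup>2 / (2 * h)) *\<^sub>R q y = exp (- (norm (x - y))\<^sup>2 / (2 * h)) *\<^sub>R q' y"
      by (rule AE_completion) (use ae in eventually_elim, simp)
  qed
qed

lemma transfer_Lq:
  fixes q q' :: "real^'n \<Rightarrow> complex"
  assumes ae: "AE x in lborel. q x = q' x"
  shows "Lq_int p lam q = Lq_int p lam q'"
  unfolding Lq_int_def
proof (intro nn_integral_cong)
  fix y :: "real^'n"
  have ae1: "AE x in lborel. q (x - y) = q' (x - y)" by (rule AE_shift[OF ae])
  have ae2: "AE x in lborel. q x - q (x - y) = q' x - q' (x - y)" using ae ae1 by eventually_elim simp
  have "lp_int p (\<lambda>x. q x - q (x - y)) UNIV = lp_int p (\<lambda>x. q' x - q' (x - y)) UNIV"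
    unfolding lp_int_UNIV by (intro nn_integral_cong_AE) (use ae2 in \<open>eventually_elim, simp\<close>)
  then show "ennreal (enn2real (lp_int p (\<lambda>x. q x - q (x - y)) UNIV) / norm y powr (real CARD('n) + lam * p))
    = ennreal (enn2real (lp_int p (\<lambda>x. q' x - q' (x - y)) UNIV) / norm y powr (real CARD('n) + lam * p))"
    by simp
qed

lemma lp_int_lborel: "lp_int p f G = (\<integral>\<^sup>+ x. ennreal (norm (f x) powr p) * indicator G x \<partial>lborel)"
  unfolding lp_int_def by (rule nn_integral_completion)

lemma lp_int_tri:
  fixes f g :: "'a::euclidean_space \<Rightarrow> complex"
  assumes [measurable]: "f \<in> borel_measurable borel" "g \<in> borel_measurable borel" "G \<in> sets borel" and p: "0 < p"
  shows "lp_int p (\<lambda>x. f x + g x) G \<le> ennreal (2 powr p) * (lp_int p f G + lp_int p g G)"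
proof -
  have "lp_int p (\<lambda>x. f x + g x) G \<le> (\<integral>\<^sup>+ x. ennreal (2 powr p) * (ennreal (norm (f x) powr p) * indicator G x + ennreal (norm (g x) powr p) * indicator G x) \<partial>lborel)"
    unfolding lp_int_lborel
  proof (intro nn_integral_mono)
    fix x
    have "norm (f x + g x) powr p \<le> 2 powr p * (norm (f x) powr p + norm (g x) powr p)"
      using pw_diff_powr[OF p, of "f x" "- g x"] by simp
    then show "ennreal (norm (f x + g x) powr p) * indicator G x \<le> ennreal (2 powr p) * (ennreal (norm (f x) powr p) * indicator G x + ennreal (norm (g x) powr p) * indicator G x)"
      by (cases "x \<in> G") (simp_all add: ennreal_plus[symmetric] ennreal_mult'[symmetric] ennreal_leI del: ennreal_plus)
  qed
  also have "\<dots> = ennreal (2 powr p) * (lp_int p f G + lp_int p g G)"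
    unfolding lp_int_lborel by (subst nn_integral_cmult) (auto simp: nn_integral_add)
  finally show ?thesis .
qed

lemma lp_int_scale:
  fixes f :: "'a::euclidean_space \<Rightarrow> complex"
  assumes [measurable]: "f \<in> borel_measurable borel" "G \<in> sets borel" and c: "0 \<le> c"
  shows "lp_int p (\<lambda>x. c *\<^sub>R f x) G = ennreal (c powr p) * lp_int p f G"
proof -
  have "lp_int p (\<lambda>x. c *\<^sub>R f x) G = (\<integral>\<^sup>+ x. ennreal (c powr p) * (ennreal (norm (f x) powr p) * indicator G x) \<partial>lborel)"
    unfolding lp_int_lborel
  proof (intro nn_integral_cong)
    fix x
    have "norm (c *\<^sub>R f x) powr p = c powr p * norm (f x) powr p" using c by (simp add: powr_mult)
    then show "ennreal (norm (c *\<^sub>R f x) powr p) * indicator G x = ennreal (c powr p) * (ennreal (norm (f x) powr p) * indicator G x)"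
      by (simp add: ennreal_mult' mult.assoc)
  qed
  also have "\<dots> = ennreal (c powr p) * lp_int p f G"
    unfolding lp_int_lborel by (rule nn_integral_cmult) measurable
  finally show ?thesis .
qed

lemma lp_int_sub: "lp_int p f G \<le> lp_int p f UNIV"
  unfolding lp_int_def by (intro nn_integral_mono) (auto split: split_indicator)

definition gS :: "nat \<Rightarrow> real" where "gS d = (\<Sum>k. exp (- (real k)\<^sup>2 / 2) * (real k + 1) ^ d)"
definition Kc :: "nat \<Rightarrow> real" where
  "Kc d = 2 * max (max 1 (gS d * unit_ball_vol (real d)) * 2 powr (real d/2) * (2*(real d+1)) powr ((real d+1)/2)
            / (exp (-1/2) * unit_ball_vol (real d))) (1 / (exp (-1/2) * unit_ball_vol (real d)))"

lemma gS_pos: "0 < gS d"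
  unfolding gS_def by (rule suminf_pos[OF gauss_series_summable]) simp

lemma Kc_pos: "0 < Kc d"
  unfolding Kc_def by (simp add: less_max_iff_disj)

lemma final_fixed:
  fixes q :: "real^'n \<Rightarrow> complex" and p lam h :: real and G :: "(real^'n) set"
  assumes p: "1 \<le> p" and qm: "q \<in> borel_measurable lebesgue" and qfin: "lp_int p q UNIV < \<infinity>" and G: "open G"
    and lam: "0 < lam" "lam < 1" and LqF: "Lq_int p lam q < \<infinity>" and h: "0 < h"
    and Tfin: "lp_int p (SB_transform h q) G < \<infinity>"
  shows "lp_norm p q G \<le> Kc CARD('n) * (h powr (- real CARD('n) / 2) * lp_norm p (SB_transform h q) G + Lq p lam q * h powr (lam / 2))"
proof -
  obtain q' where q'[measurable]: "q' \<in> borel_measurable borel" and ae: "AE x in lborel. q x = q' x"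
    using borel_version[OF qm] by blast
  have eT: "SB_transform h q = SB_transform h q'" by (rule transfer_SB[OF qm q' ae])
  have eL: "Lq_int p lam q = Lq_int p lam q'" by (rule transfer_Lq[OF ae])
  have q'fin: "lp_int p q' UNIV < \<infinity>" using qfin transfer_lp[OF ae, of p UNIV] by simp
  let ?n = "real CARD('n)"
  define V where "V = unit_ball_vol ?n"
  define Lo where "Lo = exp (-1/2) * V"
  define Ub where "Ub = gS CARD('n) * V"
  have V: "0 < V" unfolding V_def by simp
  have Lo: "0 < Lo" unfolding Lo_def using V by simp
  have Ub: "0 < Ub" unfolding Ub_def using V gS_pos by simp
  have n1: "1 \<le> ?n" using zero_less_card_finite[where 'a='n] by linarith
  have p0: "0 < p" using p by simp
  have gbound: "\<exists>A. (\<integral>\<^sup>+ z. ennreal (exp (- (norm (z::real^'n))\<^sup>2/(2*t))) \<partial>lborel) = ennreal A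
      \<and> Lo * t powr (?n/2) \<le> A \<and> A \<le> Ub * t powr (?n/2)" if t: "0 < t" for t
  proof -
    have lo: "ennreal (Lo * t powr (?n/2)) \<le> (\<integral>\<^sup>+ z. ennreal (exp (- (norm (z::real^'n))\<^sup>2/(2*t))) \<partial>lborel)"
      using gauss_lower[OF t, where 'a="real^'n"] t
      by (simp add: Lo_def V_def sqrt_pow_powr mult.assoc)
    have up: "(\<integral>\<^sup>+ z. ennreal (exp (- (norm (z::real^'n))\<^sup>2/(2*t))) \<partial>lborel) \<le> ennreal (Ub * t powr (?n/2))"
      using gauss_upper[OF t, where 'a="real^'n"] t
      by (simp add: Ub_def V_def gS_def sqrt_pow_powr mult.assoc)
    obtain A where A: "(\<integral>\<^sup>+ z. ennreal (exp (- (norm (z::real^'n))\<^sup>2/(2*t))) \<partial>lborel) = ennreal A" "0 \<le> A"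
      using up by (cases "(\<integral>\<^sup>+ z. ennreal (exp (- (norm (z::real^'n))\<^sup>2/(2*t))) \<partial>lborel)" rule: ennreal_cases) (auto simp: top_unique)
    have "Lo * t powr (?n/2) \<le> A" using lo A by (simp add: ennreal_le_iff)
    moreover have "A \<le> Ub * t powr (?n/2)" using up A Ub t by (simp add: ennreal_le_iff)
    ultimately show ?thesis using A by blast
  qed
  obtain A where A: "(\<integral>\<^sup>+ z. ennreal (exp (- (norm (z::real^'n))\<^sup>2/(2*h))) \<partial>lborel) = ennreal A"
    and ALo: "Lo * h powr (?n/2) \<le> A" using gbound[OF h] by blast
  have h2: "0 < 2*h" using h by simp
  obtain B where B0: "(\<integral>\<^sup>+ z. ennreal (exp (- (norm (z::real^'n))\<^sup>2/(2*(2*h)))) \<partial>lborel) = ennreal B"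
    and BLo: "Lo * (2*h) powr (?n/2) \<le> B" and BUb: "B \<le> Ub * (2*h) powr (?n/2)" using gbound[OF h2] by blast
  have B: "(\<integral>\<^sup>+ z. ennreal (exp (- (norm (z::real^'n))\<^sup>2/(4*h))) \<partial>lborel) = ennreal B"
    using B0 by simp
  have Apos: "0 < A" using ALo Lo h by (smt (verit, best) mult_pos_pos powr_gt_zero)
  have Bpos: "0 < B" using BLo Lo h by (smt (verit, best) mult_pos_pos powr_gt_zero)
  define Q where "Q = B powr (p-1) / A powr p * (2*(?n+1)) powr ((?n+1)*p/2) * h powr ((?n + lam*p)/2)"
  define K0 where "K0 = max 1 Ub * 2 powr (?n/2) * (2*(?n+1)) powr ((?n+1)/2) / Lo"
  have Q0: "0 \<le> Q" unfolding Q_def by simp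
  have K0: "0 < K0" unfolding K0_def using Lo by simp
  have main: "lp_int p (\<lambda>x. q' x - (1/A) *\<^sub>R SB_transform h q' x) UNIV \<le> ennreal Q * Lq_int p lam q'"
    unfolding Q_def using lam by (intro main_est[OF q' p lam(1) _ h q'fin A Apos B Bpos]) auto
  have Qb: "Q \<le> (K0 * h powr (lam/2)) powr p"
    unfolding Q_def K0_def by (rule Q_bound[OF p h n1 lam(1) Lo Ub ALo Bpos BUb])
  let ?T = "SB_transform h q'"
  have Tm[measurable]: "?T \<in> borel_measurable borel" by (rule SB_meas[OF q'])
  have Gm[measurable]: "G \<in> sets borel" using G by simp
  have am[measurable]: "(\<lambda>x. q' x - (1/A) *\<^sub>R ?T x) \<in> borel_measurable borel" by measurable
  have bm[measurable]: "(\<lambda>x. (1/A) *\<^sub>R ?T x) \<in> borel_measurable borel" by measurable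
  have "lp_int p q' G = lp_int p (\<lambda>x. (q' x - (1/A) *\<^sub>R ?T x) + (1/A) *\<^sub>R ?T x) G" by simp
  also have "\<dots> \<le> ennreal (2 powr p) * (lp_int p (\<lambda>x. q' x - (1/A) *\<^sub>R ?T x) G + lp_int p (\<lambda>x. (1/A) *\<^sub>R ?T x) G)"
    by (rule lp_int_tri[OF am bm Gm p0])
  finally have tri: "lp_int p q' G \<le> ennreal (2 powr p) * (lp_int p (\<lambda>x. q' x - (1/A) *\<^sub>R ?T x) G + lp_int p (\<lambda>x. (1/A) *\<^sub>R ?T x) G)" .
  have Ia: "lp_int p (\<lambda>x. q' x - (1/A) *\<^sub>R ?T x) G \<le> ennreal Q * Lq_int p lam q'"
    using lp_int_sub main by (rule order_trans)
  have Ib: "lp_int p (\<lambda>x. (1/A) *\<^sub>R ?T x) G = ennreal ((1/A) powr p) * lp_int p ?T G"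
    using Apos by (intro lp_int_scale) auto
  obtain LI where LI: "Lq_int p lam q' = ennreal LI" "0 \<le> LI"
    using LqF eL by (cases "Lq_int p lam q'" rule: ennreal_cases) auto
  obtain xT where xT: "lp_int p ?T G = ennreal xT" "0 \<le> xT"
    using Tfin eT by (cases "lp_int p ?T G" rule: ennreal_cases) auto
  obtain xa where xa: "lp_int p (\<lambda>x. q' x - (1/A) *\<^sub>R ?T x) G = ennreal xa" "0 \<le> xa"
    using Ia LI by (cases "lp_int p (\<lambda>x. q' x - (1/A) *\<^sub>R ?T x) G" rule: ennreal_cases)
                   (auto simp: ennreal_mult'[symmetric] Q0 top_unique)
  have xaQ: "xa \<le> Q * LI" using Ia xa LI Q0 by (simp add: ennreal_mult'[symmetric] ennreal_le_iff)
  define xb where "xb = (1/A) powr p * xT"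
  have xb0: "0 \<le> xb" unfolding xb_def using xT by simp
  have xbI: "lp_int p (\<lambda>x. (1/A) *\<^sub>R ?T x) G = ennreal xb" unfolding Ib xb_def xT by (simp add: ennreal_mult')
  obtain xq where xq: "lp_int p q' G = ennreal xq" "0 \<le> xq"
    using tri xa xbI by (cases "lp_int p q' G" rule: ennreal_cases) (auto simp: ennreal_mult'[symmetric] ennreal_plus[symmetric] xb0 top_unique simp del: ennreal_plus)
  have xq_le: "xq \<le> 2 powr p * (xa + xb)"
    using tri xq xa xbI xb0 by (simp add: ennreal_plus[symmetric] ennreal_mult'[symmetric] ennreal_le_iff del: ennreal_plus)
  have nq: "lp_norm p q G = xq powr (1/p)"
    unfolding lp_norm_def using transfer_lp[OF ae, of p G] xq by simp
  have nT: "lp_norm p (SB_transform h q) G = xT powr (1/p)"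
    unfolding lp_norm_def eT using xT by simp
  have nL: "Lq p lam q = LI powr (1/p)"
    unfolding Lq_def eL using LI by simp
  have "xq powr (1/p) \<le> (2 powr p * (xa + xb)) powr (1/p)"
    using xq_le xq p by (intro powr_mono2) auto
  also have "\<dots> = 2 * (xa + xb) powr (1/p)"
    using xa xb0 p by (simp add: powr_mult powr_powr)
  also have "\<dots> \<le> 2 * (xa powr (1/p) + xb powr (1/p))"
    using xa xb0 p by (intro mult_left_mono powr_subadd) auto
  finally have s1: "lp_norm p q G \<le> 2 * (xa powr (1/p) + xb powr (1/p))" unfolding nq .
  have s2: "xa powr (1/p) \<le> K0 * (h powr (lam/2) * Lq p lam q)"
  proof -
    have "xa powr (1/p) \<le> (Q * LI) powr (1/p)" using xaQ xa p by (intro powr_mono2) auto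
    also have "\<dots> = Q powr (1/p) * LI powr (1/p)" using Q0 LI by (simp add: powr_mult)
    also have "Q powr (1/p) \<le> ((K0 * h powr (lam/2)) powr p) powr (1/p)" using Qb Q0 p by (intro powr_mono2) auto
    also have "\<dots> = K0 * h powr (lam/2)" using K0 h p by (simp add: powr_powr)
    finally show ?thesis unfolding nL using LI by (simp add: mult_right_mono mult.assoc)
  qed
  have s3: "xb powr (1/p) = (1/A) * lp_norm p (SB_transform h q) G"
    unfolding xb_def nT using Apos xT p by (simp add: powr_mult powr_powr)
  have s4: "1/A \<le> h powr (- ?n/2) / Lo"
  proof -
    have "0 < Lo * h powr (?n/2)" using Lo h by simp
    then have "1/A \<le> 1 / (Lo * h powr (?n/2))" using ALo by (intro divide_left_mono) auto
    also have "\<dots> = h powr (- ?n/2) / Lo" using h by (simp add: powr_minus divide_simps)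
    finally show ?thesis .
  qed
  have nT0: "0 \<le> lp_norm p (SB_transform h q) G" unfolding nT by simp
  have nL0: "0 \<le> Lq p lam q" unfolding nL by simp
  define M where "M = max K0 (1/Lo)"
  have KcM: "Kc CARD('n) = 2 * M" unfolding M_def Kc_def K0_def Lo_def Ub_def V_def by simp
  have s5: "xa powr (1/p) \<le> M * (Lq p lam q * h powr (lam/2))"
  proof -
    have "K0 * (h powr (lam/2) * Lq p lam q) \<le> M * (h powr (lam/2) * Lq p lam q)"
      unfolding M_def using nL0 by (intro mult_right_mono) auto
    then show ?thesis using s2 by (simp add: mult.commute)
  qed
  have s6: "xb powr (1/p) \<le> M * (h powr (- ?n/2) * lp_norm p (SB_transform h q) G)"
  proof -
    have "(1/A) * lp_norm p (SB_transform h q) G \<le> (h powr (- ?n/2) / Lo) * lp_norm p (SB_transform h q) G"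
      using s4 nT0 by (rule mult_right_mono)
    also have "\<dots> = (1/Lo) * (h powr (- ?n/2) * lp_norm p (SB_transform h q) G)" by simp
    also have "\<dots> \<le> M * (h powr (- ?n/2) * lp_norm p (SB_transform h q) G)"
      unfolding M_def using nT0 by (intro mult_right_mono) auto
    finally show ?thesis unfolding s3 .
  qed
  have "lp_norm p q G \<le> 2 * (M * (h powr (- ?n/2) * lp_norm p (SB_transform h q) G) + M * (Lq p lam q * h powr (lam/2)))"
  proof -
    have "2 * (xa powr (1/p) + xb powr (1/p)) \<le> 2 * (M * (h powr (- ?n/2) * lp_norm p (SB_transform h q) G) + M * (Lq p lam q * h powr (lam/2)))"
      using s5 s6 by simp
    then show ?thesis using s1 by (rule order_trans[rotated])
  qed
  then show ?thesis unfolding KcM by (simp add: algebra_simps)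
qed

theorem lemma2p8:
  shows "\<exists>C>0. \<forall>(p::real) (q::real^'n \<Rightarrow> complex) (G::(real^'n) set) (lam::real).
     1 \<le> p \<and> q \<in> borel_measurable lebesgue \<and> lp_int p q UNIV < \<infinity> \<and> open G \<and>
     0 < lam \<and> lam < 1 \<and> Lq_int p lam q < \<infinity> \<longrightarrow>
     (\<forall>h. 0 < h \<and> h \<le> 1 \<and> lp_int p (SB_transform h q) G < \<infinity> \<longrightarrow>
        lp_norm p q G \<le> C * (h powr (- real CARD('n) / 2) * lp_norm p (SB_transform h q) G
                              + Lq p lam q * h powr (lam / 2)))"
    apply (rule exI[of _ "Kc CARD('n)"], intro conjI allI impI)
   apply (rule Kc_pos)
  apply (elim conjE)
  apply (rule final_fixed)
          apply assumption+
  done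

end
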